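(* Let $k,l$ be positive integers. If $\mathcal{F}\subset[k]\times[l]$ does not contain three distinct elements $\mathbf u,\mathbf v,\mathbf w$ with $\mathbf u=\mathbf v\vee\mathbf w$, then $|\mathcal{F}|\le k+l$.
   Context: For $\mathbf v,\mathbf w\in[k]\times[l]$, $\mathbf v\vee\mathbf w$ is the coordinatewise maximum of $\mathbf v$ and $\mathbf w$. *)

theory Defs
  imports Main
begin

definition vjoin :: "nat \<times> nat \<Rightarrow> nat \<times> nat \<Rightarrow> nat \<times> nat" where
  "vjoin v w = (max (fst v) (fst w), max (snd v) (snd w))"

end

theory Submission
  imports Defs
begin

theorem mainTheorem8:
  fixes k l :: nat and F :: "(nat \<times> nat) set"
  assumes "k > 0" and "l > 0"
    and "F \<subseteq> {1..k} \<times> {1..l}"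
    and "\<not> (\<exists>u\<in>F. \<exists>v\<in>F. \<exists>w\<in>F. u \<noteq> v \<and> u \<noteq> w \<and> v \<noteq> w \<and> u = vjoin v w)"
  shows "card F \<le> k + l"
proof -
  define R where "R = {u\<in>F. \<forall>v\<in>F. fst v = fst u \<longrightarrow> snd u \<le> snd v}"
  define C where "C = {u\<in>F. \<forall>v\<in>F. snd v = snd u \<longrightarrow> fst u \<le> fst v}"
  have finF: "finite F" using assms(3) finite_subset by blast
  have sub: "F \<subseteq> R \<union> C"
  proof
    fix u assume u: "u \<in> F"
    show "u \<in> R \<union> C"
    proof (rule ccontr)
      assume "u \<notin> R \<union> C"
      then obtain v w where v: "v \<in> F" "fst v = fst u" "snd v < snd u"
        and w: "w \<in> F" "snd w = snd u" "fst w < fst u"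
        using u unfolding R_def C_def by force
      have "u = vjoin v w" using v w by (cases u, cases v, cases w) (auto simp: vjoin_def)
      moreover have "u \<noteq> v" "u \<noteq> w" "v \<noteq> w" using v w by auto
      ultimately show False using assms(4) u v w by blast
    qed
  qed
  have "inj_on fst R" unfolding inj_on_def
  proof (intro ballI impI)
    fix u v assume u: "u \<in> R" and v: "v \<in> R" and e: "fst u = fst v"
    have "snd u \<le> snd v" using u v e unfolding R_def by auto
    moreover have "snd v \<le> snd u" using u v e unfolding R_def by auto
    ultimately show "u = v" using e by (simp add: prod_eq_iff)
  qed
  moreover have "fst ` R \<subseteq> {1..k}" using assms(3) unfolding R_def by auto
  ultimately have cR: "card R \<le> k" using card_inj_on_le[of fst R "{1..k}"] by simp
  have "inj_on snd C" unfolding inj_on_def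
  proof (intro ballI impI)
    fix u v assume u: "u \<in> C" and v: "v \<in> C" and e: "snd u = snd v"
    have "fst u \<le> fst v" using u v e unfolding C_def by auto
    moreover have "fst v \<le> fst u" using u v e unfolding C_def by auto
    ultimately show "u = v" using e by (simp add: prod_eq_iff)
  qed
  moreover have "snd ` C \<subseteq> {1..l}" using assms(3) unfolding C_def by auto
  ultimately have cC: "card C \<le> l" using card_inj_on_le[of snd C "{1..l}"] by simp
  have "finite R" "finite C" using finF unfolding R_def C_def by auto
  hence "card F \<le> card (R \<union> C)" using sub card_mono by blast
  also have "\<dots> \<le> card R + card C" by (rule card_Un_le)
  finally show ?thesis using cR cC by simp
qed

end
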